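(* Let $X$ be a nonempty set and let $Z\subset\{0,1\}^X$ be a nonempty finite linearly dependent set of nonzero vectors, and put $p=|Z|-1$. Then there exist integers $(\Delta_w)_{w\in Z}$, not all zero, such that $|\Delta_w|\le a(p)$ for each $w\in Z$ and $\sum_{w\in Z}\Delta_w\, w=0$.
   Context: $\{0,1\}^X\subset\mathbb{R}^X$ is the set of functions $X\to\{0,1\}$, viewed as vectors in the real vector space $\mathbb{R}^X$. For a positive integer $p$, $a(p)$ denotes the maximum determinant of a $p\times p$ matrix all of whose entries are $0$ or $1$. *)

theory Defs
  imports Main "HOL-Library.Function_Algebras" "Jordan_Normal_Form.Determinant"
begin

definition fscale :: "real \<Rightarrow> ('x \<Rightarrow> real) \<Rightarrow> ('x \<Rightarrow> real)" where
  "fscale c f = (\<lambda>x. c * f x)"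

(* a(p): maximum determinant of a p x p matrix with all entries 0 or 1 *)
definition max_det01 :: "nat \<Rightarrow> real" where
  "max_det01 p = Max {det A | A :: real mat. A \<in> carrier_mat p p \<and>
      (\<forall>i<p. \<forall>j<p. A $$ (i, j) \<in> {0, 1})}"

end

theory Submission
  imports Defs
begin

lemma sum_fun_apply_x: "finite A \<Longrightarrow> (\<Sum>v\<in>A. (h v :: 'x \<Rightarrow> real)) x = (\<Sum>v\<in>A. h v x)"
  by (induction A rule: finite_induct) auto

lemma module_fscale: "Modules.module fscale"
  by unfold_locales (auto simp: fscale_def fun_eq_iff algebra_simps)

definition is01 :: "nat \<Rightarrow> real mat \<Rightarrow> bool" where
  "is01 k A \<longleftrightarrow> A \<in> carrier_mat k k \<and> (\<forall>i<k. \<forall>j<k. A $$ (i, j) \<in> {0, 1})"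

lemma det01_Ints:
  assumes "is01 n A" shows "det A \<in> \<int>"
proof -
  have A: "A \<in> carrier_mat n n" using assms by (simp add: is01_def)
  have "\<And>p i. p permutes {0..<n} \<Longrightarrow> i \<in> {0..<n} \<Longrightarrow> A $$ (i, p i) \<in> \<int>"
    using assms unfolding is01_def
    by (metis Ints_0 Ints_1 atLeastLessThan_iff empty_iff insert_iff permutes_in_image)
  then show ?thesis
    unfolding det_def'[OF A]
    by (intro Ints_sum Ints_mult Ints_prod Ints_of_int) auto
qed

lemma max_det01_ge:
  assumes "is01 p A" shows "det A \<le> max_det01 p"
proof -
  let ?S = "{A :: real mat. A \<in> carrier_mat p p \<and> (\<forall>i<p. \<forall>j<p. A $$ (i, j) \<in> {0, 1})}"
  have "?S \<subseteq> (\<lambda>h. mat p p h) ` (({0..<p} \<times> {0..<p}) \<rightarrow>\<^sub>E {0, 1})"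
  proof
    fix B assume B: "B \<in> ?S"
    let ?h = "restrict (\<lambda>ij. B $$ ij) ({0..<p} \<times> {0..<p})"
    have "B = mat p p ?h" using B by (intro eq_matI) auto
    moreover have "?h \<in> ({0..<p} \<times> {0..<p}) \<rightarrow>\<^sub>E {0, 1}" unfolding restrict_PiE_iff using B by auto
    ultimately show "B \<in> (\<lambda>h. mat p p h) ` (({0..<p} \<times> {0..<p}) \<rightarrow>\<^sub>E {0, 1})" by blast
  qed
  hence "finite ?S" by (rule finite_subset) (intro finite_imageI finite_PiE, auto)
  hence fin: "finite {det A | A :: real mat. A \<in> carrier_mat p p \<and> (\<forall>i<p. \<forall>j<p. A $$ (i, j) \<in> {0, 1})}"
    by (simp add: setcompr_eq_image)
  show ?thesis unfolding max_det01_def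
    by (rule Max_ge[OF fin]) (use assms in \<open>auto simp: is01_def\<close>)
qed

lemma max_det01_ext:
  "is01 k A \<Longrightarrow> det A \<le> max_det01 (k + d)"
proof (induction d arbitrary: k A)
  case 0 thus ?case using max_det01_ge by simp
next
  case (Suc d)
  define B where "B = mat (Suc k) (Suc k) (\<lambda>(i,j). if i < k \<and> j < k then A $$ (i,j) else if i = k \<and> j = k then 1 else 0)"
  have Bc: "B \<in> carrier_mat (Suc k) (Suc k)" by (simp add: B_def)
  have B01: "is01 (Suc k) B" using Suc.prems by (auto simp: is01_def B_def)
  have "det B = (\<Sum>j<Suc k. B $$ (k,j) * cofactor B k j)"
    by (rule laplace_expansion_row[OF Bc]) simp
  also have "\<dots> = B $$ (k,k) * cofactor B k k"
    by (simp add: B_def)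
  also have "\<dots> = det (mat_delete B k k)"
    by (simp add: B_def cofactor_def)
  also have "mat_delete B k k = A"
    using Suc.prems by (intro eq_matI) (auto simp: B_def mat_delete_def is01_def)
  finally have "det B = det A" .
  with Suc.IH[OF B01] show ?case by simp
qed

lemma max_det01_abs:
  assumes A: "is01 k A" and kp: "k \<le> p" shows "\<bar>det A\<bar> \<le> max_det01 p"
proof (cases "det A \<ge> 0")
  case True
  with max_det01_ext[OF A, of "p - k"] kp show ?thesis by simp
next
  case False
  have Ac: "A \<in> carrier_mat k k" using A by (simp add: is01_def)
  have k2: "k \<ge> 2"
  proof (rule ccontr)
    assume "\<not> k \<ge> 2"
    hence "k = 0 \<or> k = 1" by auto
    thus False
    proof
      assume "k = 0" thus False using Ac False by simp
    next
      assume k1: "k = 1"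
      hence "det A = A $$ (0,0)" using Ac det_single by blast
      moreover have "A $$ (0,0) \<in> {0,1}" using A k1 by (simp add: is01_def)
      ultimately show False using False by auto
    qed
  qed
  define B where "B = swaprows 0 1 A"
  have A01: "\<And>i j. i<k \<Longrightarrow> j<k \<Longrightarrow> A$$(i,j) \<in> {0,1}" using A by (simp add: is01_def)
  have "B $$ (i,j) \<in> {0,1}" if i: "i < k" and j: "j < k" for i j
  proof -
    have "B $$ (i,j) = A $$ ((if i = 0 then 1 else if i = 1 then 0 else i), j)"
      using Ac i j k2 by (auto simp: B_def mat_swaprows_def)
    moreover have "(if i = 0 then 1 else if i = 1 then 0 else i) < k" using k2 i by auto
    ultimately show ?thesis using A01[OF _ j] by metis
  qed
  moreover have "B \<in> carrier_mat k k" using Ac by (simp add: B_def mat_swaprows_def)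
  ultimately have B01: "is01 k B" by (simp add: is01_def)
  have "det B = - det A" unfolding B_def by (rule det_swaprows) (use k2 Ac in auto)
  with max_det01_ext[OF B01, of "p - k"] kp False show ?thesis by simp
qed

definition minor :: "(nat \<Rightarrow> 'x) \<Rightarrow> (nat \<Rightarrow> 'x \<Rightarrow> real) \<Rightarrow> nat \<Rightarrow> real mat" where
  "minor f g k = mat k k (\<lambda>(a,b). g b (f a))"

lemma minor_carrier[simp]: "minor f g k \<in> carrier_mat k k"
  by (simp add: minor_def)

lemma minor_inj:
  assumes "det (minor f g k) \<noteq> 0" shows "inj_on g {0..<k}"
proof (rule inj_onI, rule ccontr)
  fix a b assume ab: "a \<in> {0..<k}" "b \<in> {0..<k}" "g a = g b" "a \<noteq> b"
  have "col (minor f g k) a = col (minor f g k) b"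
    using ab by (intro eq_vecI) (auto simp: minor_def)
  hence "det (minor f g k) = 0"
    using ab by (intro det_identical_columns[OF minor_carrier, of a b]) auto
  with assms show False by simp
qed

theorem lemma2:
  fixes Z :: "('x \<Rightarrow> real) set"
  assumes "finite Z" and "Z \<noteq> {}"
    and "\<forall>w\<in>Z. \<forall>x. w x \<in> {0, 1}"
    and "\<forall>w\<in>Z. w \<noteq> (\<lambda>x. 0)"
    and "module.dependent fscale Z"
  shows "\<exists>\<Delta> :: ('x \<Rightarrow> real) \<Rightarrow> int. (\<exists>w\<in>Z. \<Delta> w \<noteq> 0)
           \<and> (\<forall>w\<in>Z. real_of_int \<bar>\<Delta> w\<bar> \<le> max_det01 (card Z - 1))
           \<and> (\<forall>x. (\<Sum>w\<in>Z. real_of_int (\<Delta> w) * w x) = 0)"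
proof -
  interpret M: Modules.module fscale by (rule module_fscale)
  obtain u where u1: "\<exists>v\<in>Z. u v \<noteq> 0" and u2: "(\<Sum>v\<in>Z. fscale (u v) v) = 0"
    using M.dependent_finite[OF assms(1)] assms(5) by blast
  have u3: "(\<Sum>v\<in>Z. u v * v x) = 0" for x
  proof -
    have "(\<Sum>v\<in>Z. fscale (u v) v) x = 0" using u2 by simp
    thus ?thesis by (simp add: sum_fun_apply_x[OF assms(1)] fscale_def)
  qed
  define n where "n = card Z"
  define K where "K = {k. \<exists>f g. (\<forall>b<k. g b \<in> Z) \<and> det (minor f g k) \<noteq> 0}"
  have K_le: "k \<le> n" if kK0: "k \<in> K" for k
  proof -
    obtain f g where gZ: "\<forall>b<k. g b \<in> Z" and d: "det (minor f g k) \<noteq> 0"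
      using kK0 unfolding K_def by blast
    have "inj_on g {0..<k}" by (rule minor_inj[OF d])
    moreover have "g ` {0..<k} \<subseteq> Z" using gZ by auto
    ultimately have "card {0..<k} \<le> card Z" using card_inj_on_le assms(1) by blast
    thus ?thesis by (simp add: n_def)
  qed
  have nK: "n \<notin> K"
  proof
    assume "n \<in> K"
    then obtain f g where gZ: "\<forall>b<n. g b \<in> Z" and d: "det (minor f g n) \<noteq> 0"
      unfolding K_def by blast
    have inj: "inj_on g {0..<n}" by (rule minor_inj[OF d])
    have sub: "g ` {0..<n} \<subseteq> Z" using gZ by auto
    have "card (g ` {0..<n}) = card Z" using card_image[OF inj] by (simp add: n_def)
    hence img: "g ` {0..<n} = Z" using card_subset_eq[OF assms(1) sub] by simp
    define v where "v = vec n (\<lambda>b. u (g b))"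
    have vc: "v \<in> carrier_vec n" by (simp add: v_def)
    have "v \<noteq> 0\<^sub>v n"
    proof
      assume v0: "v = 0\<^sub>v n"
      obtain w where w: "w \<in> Z" "u w \<noteq> 0" using u1 by blast
      then obtain b where b: "b < n" "g b = w" using img by force
      have "v $ b = 0" using v0 b by simp
      thus False using b w by (simp add: v_def)
    qed
    moreover have "minor f g n *\<^sub>v v = 0\<^sub>v n"
    proof (intro eq_vecI)
      fix a assume a: "a < dim_vec (0\<^sub>v n :: real vec)"
      have "(minor f g n *\<^sub>v v) $ a = (\<Sum>b\<in>{0..<n}. g b (f a) * u (g b))"
        using a by (simp add: mult_mat_vec_def scalar_prod_def minor_def v_def)
      also have "\<dots> = (\<Sum>w\<in>g ` {0..<n}. w (f a) * u w)"
        by (simp add: sum.reindex[OF inj])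
      also have "\<dots> = 0" using u3[of "f a"] img by (simp add: mult.commute)
      finally show "(minor f g n *\<^sub>v v) $ a = 0\<^sub>v n $ a" using a by simp
    qed (simp add: minor_def)
    ultimately have "det (minor f g n) = 0"
      using det_0_iff_vec_prod_zero[OF minor_carrier[of f g n]] vc by blast
    with d show False by simp
  qed
  have "0 \<in> K" unfolding K_def
    by (intro CollectI exI[of _ "\<lambda>_. undefined"] exI[of _ "\<lambda>_. undefined"])
       (simp add: det_dim_zero[OF minor_carrier])
  have finK: "finite K" using K_le by (intro finite_subset[of K "{..n}"]) auto
  define k where "k = Max K"
  have kK: "k \<in> K" unfolding k_def using finK \<open>0 \<in> K\<close> by (intro Max_in) auto
  have kn: "k < n" using K_le[OF kK] nK kK by (cases "k = n") auto
  have SkK: "Suc k \<notin> K"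
  proof
    assume "Suc k \<in> K"
    hence "Suc k \<le> k" unfolding k_def using finK by (intro Max_ge)
    thus False by simp
  qed
  obtain f g where gZ: "\<forall>b<k. g b \<in> Z" and dk: "det (minor f g k) \<noteq> 0"
    using kK unfolding K_def by blast
  have ginj: "inj_on g {0..<k}" by (rule minor_inj[OF dk])
  obtain j0 where j0: "j0 \<in> Z" "j0 \<notin> g ` {0..<k}"
  proof -
    have "\<not> Z \<subseteq> g ` {0..<k}"
    proof
      assume "Z \<subseteq> g ` {0..<k}"
      hence "card Z \<le> card (g ` {0..<k})" by (intro card_mono) auto
      also have "\<dots> = k" using card_image[OF ginj] by simp
      finally show False using kn by (simp add: n_def)
    qed
    thus ?thesis using that by blast
  qed
  define g' where "g' = g(k := j0)"
  have g'Z: "\<forall>b<Suc k. g' b \<in> Z" using gZ j0 by (auto simp: g'_def less_Suc_eq)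
  have g'inj: "inj_on g' {..<Suc k}"
  proof (rule inj_onI)
    fix a b assume a: "a \<in> {..<Suc k}" and b: "b \<in> {..<Suc k}" and e: "g' a = g' b"
    show "a = b"
    proof (cases "a = k"; cases "b = k")
      assume "a = k" "b \<noteq> k" thus ?thesis using e j0 b by (auto simp: g'_def)
    next
      assume "a \<noteq> k" "b = k" thus ?thesis using e j0 a by (auto simp: g'_def)
    next
      assume "a \<noteq> k" "b \<noteq> k" thus ?thesis using e a b ginj
        by (auto simp: g'_def inj_on_def less_Suc_eq)
    qed simp
  qed
  define D where "D c = mat k k (\<lambda>(a,b). g' (if b < c then b else Suc b) (f a))" for c
  define C where "C c = (-1)^(k+c) * det (D c)" for c
  have key: "(\<Sum>c<Suc k. C c * g' c x) = 0" for x
  proof -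
    let ?M = "minor (f(k:=x)) g' (Suc k)"
    have "det ?M = 0" using SkK g'Z unfolding K_def by blast
    moreover have "det ?M = (\<Sum>j<Suc k. ?M $$ (k,j) * cofactor ?M k j)"
      by (rule laplace_expansion_row[OF minor_carrier]) simp
    moreover have "?M $$ (k,j) * cofactor ?M k j = C j * g' j x" if "j < Suc k" for j
    proof -
      have "mat_delete ?M k j = D j"
        by (intro eq_matI) (auto simp: mat_delete_def minor_def D_def)
      thus ?thesis using that by (simp add: minor_def cofactor_def C_def)
    qed
    ultimately show ?thesis by simp
  qed
  have Dk: "D k = minor f g k"
    by (intro eq_matI) (auto simp: D_def minor_def g'_def)
  have Ck: "C k = det (minor f g k)"
    by (simp add: C_def Dk flip: mult_2)
  have D01: "is01 k (D c)" if "c < Suc k" for c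
  proof -
    have "\<And>b. b < k \<Longrightarrow> (if b < c then b else Suc b) < Suc k" by auto
    thus ?thesis using g'Z assms(3) by (auto simp: is01_def D_def)
  qed
  have Cint: "C c \<in> \<int>" if "c < Suc k" for c
    using det01_Ints[OF D01[OF that]] by (simp add: C_def)
  have Cbd: "\<bar>C c\<bar> \<le> max_det01 (card Z - 1)" if "c < Suc k" for c
  proof -
    have "\<bar>C c\<bar> = \<bar>det (D c)\<bar>" by (simp add: C_def abs_mult)
    also have "\<dots> \<le> max_det01 (card Z - 1)"
      by (rule max_det01_abs[OF D01[OF that]]) (use kn n_def in simp)
    finally show ?thesis .
  qed
  have ofl: "real_of_int \<lfloor>C c\<rfloor> = C c" if "c < Suc k" for c
    using Cint[OF that] by (metis Ints_cases floor_of_int)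
  define \<Delta> where "\<Delta> w = (if w \<in> g' ` {..<Suc k} then \<lfloor>C (the_inv_into {..<Suc k} g' w)\<rfloor> else 0)" for w
  have \<Delta>g: "\<Delta> (g' c) = \<lfloor>C c\<rfloor>" if "c < Suc k" for c
    using that by (simp add: \<Delta>_def the_inv_into_f_f[OF g'inj])
  have "g' k = j0" by (simp add: g'_def)
  show ?thesis
  proof (intro exI[of _ \<Delta>] conjI ballI allI)
    have "\<Delta> j0 = \<lfloor>C k\<rfloor>" using \<Delta>g[of k] \<open>g' k = j0\<close> by simp
    hence "real_of_int (\<Delta> j0) = C k" using ofl[of k] by simp
    hence "\<Delta> j0 \<noteq> 0" using Ck dk by (metis of_int_0)
    thus "\<exists>w\<in>Z. \<Delta> w \<noteq> 0" using j0 by blast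
  next
    fix w assume "w \<in> Z"
    show "real_of_int \<bar>\<Delta> w\<bar> \<le> max_det01 (card Z - 1)"
    proof (cases "w \<in> g' ` {..<Suc k}")
      case True
      then obtain c where c: "c < Suc k" "w = g' c" by auto
      have "real_of_int \<bar>\<Delta> w\<bar> = \<bar>real_of_int (\<Delta> w)\<bar>" by (rule of_int_abs)
      also have "real_of_int (\<Delta> w) = C c" using \<Delta>g[OF c(1)] ofl[OF c(1)] c(2) by (simp only:)
      finally show ?thesis using Cbd[OF c(1)] by (simp only:)
    next
      case False
      hence "\<Delta> w = 0" by (simp add: \<Delta>_def)
      thus ?thesis using Cbd[of k] by simp
    qed
  next
    fix x
    have "(\<Sum>w\<in>Z. real_of_int (\<Delta> w) * w x) = (\<Sum>w\<in>g' ` {..<Suc k}. real_of_int (\<Delta> w) * w x)"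
      by (rule sum.mono_neutral_right[OF assms(1)]) (use g'Z in \<open>auto simp: \<Delta>_def\<close>)
    also have "\<dots> = (\<Sum>c<Suc k. real_of_int (\<Delta> (g' c)) * g' c x)"
      by (simp add: sum.reindex[OF g'inj])
    also have "\<dots> = (\<Sum>c<Suc k. C c * g' c x)"
      by (rule sum.cong) (simp_all add: \<Delta>g ofl)
    also have "\<dots> = 0" by (rule key)
    finally show "(\<Sum>w\<in>Z. real_of_int (\<Delta> w) * w x) = 0" .
  qed
qed

end
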